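(* Let $G$ be a connected graph with vertex set $\{u_1,\dots,u_n\}$, $n\ge2$, and let $\mathcal{H}=\{H_1,\dots,H_n\}$ be a family of non-empty graphs. Then $\dim_l(G\circ\mathcal{H})=n$ if and only if each true twin equivalence class of $G$ contains at most one vertex $u_i$ with $H_i\in\mathcal{G}$, and each $H_i$ is a bipartite graph having exactly one non-trivial connected component $H_i^*$, and this component has radius $r(H_i^* )\le2$.
   Context: All graphs are finite and simple with at least one vertex; non-empty means having at least one edge; a non-trivial connected component is one with at least two vertices. $d_G$ is shortest-path distance ($+\infty$ between components), $d_{G,2}=\min\{d_G,2\}$; $s$ distinguishes $x,y$ w.r.t. $d$ if $d(s,x)\ne d(s,y)$. $\dim_l(G)$: minimum size of $S\subseteq V(G)$ such that any two adjacent vertices are distinguished w.r.t. $d_G$ by some vertex of $S$. Local adjacency bases of $H$: minimum-size sets $S\subseteq V(H)$ such that any two adjacent vertices are distinguished w.r.t. $d_{H,2}$ by some vertex of $S$. $\mathcal{G}$: class of graphs $H$ such that every local adjacency basis $B$ of $H$ satisfies $B\subseteq N_H(v)$ for some $v\in V(H)$. True twins: $N[x]=N[y]$. Lexicographic product $G\circ\mathcal{H}$: vertex set $\bigcup_i\{u_i\}\times V(H_i)$, $(u_i,v)\sim(u_j,w)$ iff $u_iu_j\in E(G)$, or $i=j$ and $vw\in E(H_i)$. *)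

theory Defs
  imports Main "HOL-Library.Extended_Nat"
begin

definition graph :: "'a set \<Rightarrow> ('a \<Rightarrow> 'a \<Rightarrow> bool) \<Rightarrow> bool" where
  "graph V E \<longleftrightarrow> finite V \<and> V \<noteq> {} \<and>
     (\<forall>x y. E x y \<longrightarrow> x \<in> V \<and> y \<in> V) \<and>
     (\<forall>x y. E x y \<longrightarrow> E y x) \<and> (\<forall>x. \<not> E x x)"

definition nonempty_graph :: "'a set \<Rightarrow> ('a \<Rightarrow> 'a \<Rightarrow> bool) \<Rightarrow> bool" where
  "nonempty_graph V E \<longleftrightarrow> (\<exists>x y. E x y)"

definition walk_len :: "'a set \<Rightarrow> ('a \<Rightarrow> 'a \<Rightarrow> bool) \<Rightarrow> 'a \<Rightarrow> 'a \<Rightarrow> nat \<Rightarrow> bool" where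
  "walk_len V E x y n \<longleftrightarrow> (\<exists>xs. length xs = Suc n \<and> xs ! 0 = x \<and> xs ! n = y \<and>
      set xs \<subseteq> V \<and> (\<forall>i<n. E (xs ! i) (xs ! Suc i)))"

definition gdist :: "'a set \<Rightarrow> ('a \<Rightarrow> 'a \<Rightarrow> bool) \<Rightarrow> 'a \<Rightarrow> 'a \<Rightarrow> enat" where
  "gdist V E x y = Inf (enat ` {n. walk_len V E x y n})"

definition gdist2 :: "'a set \<Rightarrow> ('a \<Rightarrow> 'a \<Rightarrow> bool) \<Rightarrow> 'a \<Rightarrow> 'a \<Rightarrow> enat" where
  "gdist2 V E x y = min (gdist V E x y) 2"

definition connected_graph :: "'a set \<Rightarrow> ('a \<Rightarrow> 'a \<Rightarrow> bool) \<Rightarrow> bool" where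
  "connected_graph V E \<longleftrightarrow> (\<forall>x\<in>V. \<forall>y\<in>V. gdist V E x y \<noteq> \<infinity>)"

definition local_resolving :: "'a set \<Rightarrow> ('a \<Rightarrow> 'a \<Rightarrow> bool) \<Rightarrow> 'a set \<Rightarrow> bool" where
  "local_resolving V E S \<longleftrightarrow> S \<subseteq> V \<and>
     (\<forall>x y. E x y \<longrightarrow> (\<exists>s\<in>S. gdist V E s x \<noteq> gdist V E s y))"

definition local_metric_dim :: "'a set \<Rightarrow> ('a \<Rightarrow> 'a \<Rightarrow> bool) \<Rightarrow> nat" where
  "local_metric_dim V E = (LEAST k. \<exists>S. local_resolving V E S \<and> card S = k)"

definition local_adj_resolving :: "'a set \<Rightarrow> ('a \<Rightarrow> 'a \<Rightarrow> bool) \<Rightarrow> 'a set \<Rightarrow> bool" where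
  "local_adj_resolving V E S \<longleftrightarrow> S \<subseteq> V \<and>
     (\<forall>x y. E x y \<longrightarrow> (\<exists>s\<in>S. gdist2 V E s x \<noteq> gdist2 V E s y))"

definition local_adj_basis :: "'a set \<Rightarrow> ('a \<Rightarrow> 'a \<Rightarrow> bool) \<Rightarrow> 'a set \<Rightarrow> bool" where
  "local_adj_basis V E B \<longleftrightarrow> local_adj_resolving V E B \<and>
     (\<forall>S. local_adj_resolving V E S \<longrightarrow> card B \<le> card S)"

definition in_class_G :: "'a set \<Rightarrow> ('a \<Rightarrow> 'a \<Rightarrow> bool) \<Rightarrow> bool" where
  "in_class_G V E \<longleftrightarrow> (\<forall>B. local_adj_basis V E B \<longrightarrow> (\<exists>v\<in>V. B \<subseteq> {w. E v w}))"

definition closed_nbhd :: "'a set \<Rightarrow> ('a \<Rightarrow> 'a \<Rightarrow> bool) \<Rightarrow> 'a \<Rightarrow> 'a set" where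
  "closed_nbhd V E x = insert x {y\<in>V. E x y}"

definition twin_class :: "'a set \<Rightarrow> ('a \<Rightarrow> 'a \<Rightarrow> bool) \<Rightarrow> 'a \<Rightarrow> 'a set" where
  "twin_class V E u = {v\<in>V. closed_nbhd V E v = closed_nbhd V E u}"

definition bipartite :: "'a set \<Rightarrow> ('a \<Rightarrow> 'a \<Rightarrow> bool) \<Rightarrow> bool" where
  "bipartite V E \<longleftrightarrow> (\<exists>A\<subseteq>V. \<forall>x y. E x y \<longrightarrow> (x \<in> A \<longleftrightarrow> y \<notin> A))"

definition component :: "'a set \<Rightarrow> ('a \<Rightarrow> 'a \<Rightarrow> bool) \<Rightarrow> 'a set \<Rightarrow> bool" where
  "component V E C \<longleftrightarrow> (\<exists>x\<in>V. C = {y\<in>V. gdist V E x y \<noteq> \<infinity>})"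

definition induced :: "('a \<Rightarrow> 'a \<Rightarrow> bool) \<Rightarrow> 'a set \<Rightarrow> 'a \<Rightarrow> 'a \<Rightarrow> bool" where
  "induced E C x y \<longleftrightarrow> E x y \<and> x \<in> C \<and> y \<in> C"

definition eccentricity :: "'a set \<Rightarrow> ('a \<Rightarrow> 'a \<Rightarrow> bool) \<Rightarrow> 'a \<Rightarrow> enat" where
  "eccentricity V E v = Max ((gdist V E v) ` V)"

definition radius :: "'a set \<Rightarrow> ('a \<Rightarrow> 'a \<Rightarrow> bool) \<Rightarrow> enat" where
  "radius V E = Min ((eccentricity V E) ` V)"

text \<open>Lexicographic product G \<circ> \<H>, with H_u = (VH u, EH u) attached to vertex u.\<close>
definition lex_V :: "'a set \<Rightarrow> ('a \<Rightarrow> 'b set) \<Rightarrow> ('a \<times> 'b) set" where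
  "lex_V V VH = Sigma V VH"

definition lex_E :: "'a set \<Rightarrow> ('a \<Rightarrow> 'a \<Rightarrow> bool) \<Rightarrow> ('a \<Rightarrow> 'b set) \<Rightarrow> ('a \<Rightarrow> 'b \<Rightarrow> 'b \<Rightarrow> bool)
     \<Rightarrow> 'a \<times> 'b \<Rightarrow> 'a \<times> 'b \<Rightarrow> bool" where
  "lex_E V E VH EH p q \<longleftrightarrow> p \<in> Sigma V VH \<and> q \<in> Sigma V VH \<and>
     (E (fst p) (fst q) \<or> (fst p = fst q \<and> EH (fst p) (snd p) (snd q)))"

end

theory Submission
  imports Defs
begin

lemma walk0: "walk_len V E x y 0 \<longleftrightarrow> x = y \<and> x \<in> V"
proof
  assume "walk_len V E x y 0"
  then obtain xs where "length xs = Suc 0" "xs ! 0 = x" "xs ! 0 = y" "set xs \<subseteq> V"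
    unfolding walk_len_def by auto
  then show "x = y \<and> x \<in> V" by (metis length_greater_0_conv nth_mem subsetD zero_less_Suc)
next
  assume "x = y \<and> x \<in> V"
  then show "walk_len V E x y 0" unfolding walk_len_def by (intro exI[of _ "[x]"]) auto
qed

lemma walkSuc: "walk_len V E x z (Suc n) \<longleftrightarrow> (\<exists>y. walk_len V E x y n \<and> E y z \<and> z \<in> V)"
proof
  assume "walk_len V E x z (Suc n)"
  then obtain xs where xs: "length xs = Suc (Suc n)" "xs ! 0 = x" "xs ! Suc n = z"
      "set xs \<subseteq> V" "\<forall>i<Suc n. E (xs ! i) (xs ! Suc i)"
    unfolding walk_len_def by blast
  define ys where "ys = take (Suc n) xs"
  have l: "length ys = Suc n" using xs(1) by (simp add: ys_def)
  have nth: "\<And>i. i < Suc n \<Longrightarrow> ys ! i = xs ! i" by (simp add: ys_def)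
  have "set ys \<subseteq> V" using xs(4) by (metis ys_def set_take_subset order_trans)
  then have "walk_len V E x (xs ! n) n" unfolding walk_len_def
    using l nth xs by (intro exI[of _ ys]) auto
  moreover have "E (xs ! n) z" using xs by auto
  moreover have "z \<in> V" using xs by (metis lessI nth_mem subsetD)
  ultimately show "\<exists>y. walk_len V E x y n \<and> E y z \<and> z \<in> V" by blast
next
  assume "\<exists>y. walk_len V E x y n \<and> E y z \<and> z \<in> V"
  then obtain y ys where ys: "length ys = Suc n" "ys ! 0 = x" "ys ! n = y"
      "set ys \<subseteq> V" "\<forall>i<n. E (ys ! i) (ys ! Suc i)" and e: "E y z" "z \<in> V"
    unfolding walk_len_def by blast
  have "\<forall>i<Suc n. E ((ys @ [z]) ! i) ((ys @ [z]) ! Suc i)"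
  proof (intro allI impI)
    fix i assume "i < Suc n"
    then show "E ((ys @ [z]) ! i) ((ys @ [z]) ! Suc i)"
      using ys e by (cases "i = n") (auto simp: nth_append)
  qed
  then show "walk_len V E x z (Suc n)" unfolding walk_len_def using ys e
    by (intro exI[of _ "ys @ [z]"]) (auto simp: nth_append)
qed

lemma walk_in: "walk_len V E x y n \<Longrightarrow> x \<in> V \<and> y \<in> V"
  by (induction n arbitrary: y) (auto simp: walk0 walkSuc)

lemma walk1: "walk_len V E x y (Suc 0) \<longleftrightarrow> x \<in> V \<and> E x y \<and> y \<in> V"
  by (auto simp: walkSuc walk0)

lemma walk_concat: "walk_len V E x y m \<Longrightarrow> walk_len V E y z n \<Longrightarrow> walk_len V E x z (m + n)"
proof (induction n arbitrary: z)
  case 0 then show ?case by (simp add: walk0)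
next
  case (Suc n) then show ?case by (auto simp: walkSuc)
qed

lemma walk_sym:
  assumes "\<forall>x y. E x y \<longrightarrow> E y x"
  shows "walk_len V E x y n \<Longrightarrow> walk_len V E y x n"
proof (induction n arbitrary: y)
  case 0 then show ?case by (auto simp: walk0)
next
  case (Suc n)
  then obtain p where p: "walk_len V E x p n" "E p y" "y \<in> V" by (auto simp: walkSuc)
  have "walk_len V E y p (Suc 0)" using p walk_in[OF p(1)] assms by (auto simp: walk1)
  then have "walk_len V E y x (Suc 0 + n)" using walk_concat[OF _ Suc.IH[OF p(1)]] by blast
  then show ?case by simp
qed

lemma gdist_eq: "gdist V E x y = (if \<exists>n. walk_len V E x y n
   then enat (LEAST n. walk_len V E x y n) else \<infinity>)"
proof (cases "\<exists>n. walk_len V E x y n")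
  case True
  define m where "m = (LEAST n. walk_len V E x y n)"
  have wm: "walk_len V E x y m" unfolding m_def using True by (metis LeastI)
  have "gdist V E x y = enat m" unfolding gdist_def
  proof (rule antisym)
    show "Inf (enat ` {n. walk_len V E x y n}) \<le> enat m" using wm by (auto intro: Inf_lower)
    show "enat m \<le> Inf (enat ` {n. walk_len V E x y n})"
      by (rule Inf_greatest) (auto simp: m_def intro: Least_le)
  qed
  then show ?thesis using True m_def by simp
next
  case False
  then show ?thesis by (simp add: gdist_def top_enat_def)
qed

lemma gdist_le: "walk_len V E x y n \<Longrightarrow> gdist V E x y \<le> enat n"
  unfolding gdist_def by (auto intro: Inf_lower)

lemma gdist_walk: "gdist V E x y = enat n \<Longrightarrow> walk_len V E x y n"
  by (subst (asm) gdist_eq) (auto split: if_splits intro: LeastI)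

lemma gdist_inf: "gdist V E x y = \<infinity> \<longleftrightarrow> (\<forall>n. \<not> walk_len V E x y n)"
  by (subst gdist_eq) auto

lemma gdist_zero: "gdist V E x y = 0 \<longleftrightarrow> x = y \<and> x \<in> V"
proof
  assume "gdist V E x y = 0"
  then have "walk_len V E x y 0" using gdist_walk[of V E x y 0] by (simp add: zero_enat_def)
  then show "x = y \<and> x \<in> V" by (auto simp: walk0)
next
  assume "x = y \<and> x \<in> V"
  then have "gdist V E x y \<le> enat 0" by (intro gdist_le) (auto simp: walk0)
  then show "gdist V E x y = 0" by (simp add: zero_enat_def[symmetric])
qed

lemma gdist_one:
  assumes "\<forall>x y. E x y \<longrightarrow> x \<in> V \<and> y \<in> V" "\<forall>x. \<not> E x x"
  shows "gdist V E x y = 1 \<longleftrightarrow> E x y"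
proof
  assume "gdist V E x y = 1"
  then have "walk_len V E x y (Suc 0)" using gdist_walk[of V E x y 1] by (simp add: one_enat_def)
  then show "E x y" by (simp add: walk1)
next
  assume e: "E x y"
  then have le: "gdist V E x y \<le> enat 1" using assms by (intro gdist_le) (simp add: walk1)
  have "gdist V E x y \<noteq> 0" using e assms by (auto simp: gdist_zero)
  with le show "gdist V E x y = 1"
    by (metis enat_ord_simps(1) ileI1 one_eSuc one_enat_def order_antisym_conv
        not_gr_zero)
qed

lemma gdist2_char:
  assumes "\<forall>x y. E x y \<longrightarrow> x \<in> V \<and> y \<in> V" "\<forall>x. \<not> E x x"
  shows "gdist2 V E x y = (if x = y \<and> x \<in> V then 0 else if E x y then 1 else 2)"
proof -
  have a: "gdist V E x y = 0 \<longleftrightarrow> x = y \<and> x \<in> V" by (rule gdist_zero)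
  have b: "gdist V E x y = 1 \<longleftrightarrow> E x y" by (rule gdist_one[OF assms])
  have "\<And>d::enat. min d 2 = (if d = 0 then 0 else if d = 1 then 1 else 2)"
  proof -
    fix d :: enat
    show "min d 2 = (if d = 0 then 0 else if d = 1 then 1 else 2)"
    proof (cases d)
      case (enat k)
      then show ?thesis by (cases k) (auto simp: zero_enat_def one_enat_def numeral_eq_enat min_def)
    qed (simp)
  qed
  then show ?thesis unfolding gdist2_def using a b by auto
qed

lemma gdist_mono:
  assumes "\<And>n. walk_len V E x y n \<Longrightarrow> \<exists>m\<le>n. walk_len V E x z m"
  shows "gdist V E x z \<le> gdist V E x y"
proof (cases "gdist V E x y")
  case (enat n)
  then have "walk_len V E x y n" by (rule gdist_walk)
  then obtain m where "m \<le> n" "walk_len V E x z m" using assms by blast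
  from \<open>walk_len V E x z m\<close> have "gdist V E x z \<le> enat m" by (rule gdist_le)
  then show ?thesis using enat \<open>m \<le> n\<close> by (metis enat_ord_simps(1) order_trans)
qed simp




lemma graphD:
  assumes "graph V E"
  shows "finite V" "\<And>x y. E x y \<Longrightarrow> x \<in> V \<and> y \<in> V" "\<And>x y. E x y \<Longrightarrow> E y x" "\<And>x. \<not> E x x"
  using assms unfolding graph_def by auto

lemma reach_sym: "graph V E \<Longrightarrow> gdist V E x y \<noteq> \<infinity> \<Longrightarrow> gdist V E y x \<noteq> \<infinity>"
  using walk_sym[of E V x y] by (auto simp: gdist_inf graph_def)

lemma reach_trans: "gdist V E x y \<noteq> \<infinity> \<Longrightarrow> gdist V E y z \<noteq> \<infinity> \<Longrightarrow> gdist V E x z \<noteq> \<infinity>"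
  using walk_concat[of V E x y _ z] by (auto simp: gdist_inf)

lemma walk_reach: "walk_len V E x y n \<Longrightarrow> gdist V E x y \<noteq> \<infinity>"
  by (auto simp: gdist_inf)

lemma walk_comp:
  "walk_len V E x y n \<Longrightarrow> walk_len {z\<in>V. gdist V E x z \<noteq> \<infinity>} (induced E {z\<in>V. gdist V E x z \<noteq> \<infinity>}) x y n"
proof (induction n arbitrary: y)
  case 0 then show ?case using gdist_zero[of V E x x] by (auto simp: walk0 zero_enat_def)
next
  case (Suc n)
  then obtain p where p: "walk_len V E x p n" "E p y" "y \<in> V" by (auto simp: walkSuc)
  have "gdist V E x p \<noteq> \<infinity>" "gdist V E x y \<noteq> \<infinity>"
    using walk_reach[OF p(1)] walk_reach[OF Suc.prems] by auto
  then show ?case using Suc.IH[OF p(1)] p walk_in[OF p(1)] by (auto simp: walkSuc induced_def)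
qed

lemma walk_induced: "C \<subseteq> V \<Longrightarrow> walk_len C (induced E C) x y n \<Longrightarrow> walk_len V E x y n"
  by (induction n arbitrary: y) (auto simp: walk0 walkSuc induced_def)

lemma single_to_props:
  assumes g: "graph V E" and ne: "nonempty_graph V E" and sV: "s \<in> V"
    and res: "\<And>x y. E x y \<Longrightarrow> gdist2 V E s x \<noteq> gdist2 V E s y"
  shows "bipartite V E \<and> (\<exists>!C. component V E C \<and> card C \<ge> 2) \<and>
        (\<forall>C. component V E C \<and> card C \<ge> 2 \<longrightarrow> radius C (induced E C) \<le> 2)"
proof -
  note gd = graphD[OF g]
  have ch: "\<And>x. gdist2 V E s x = (if s = x then 0 else if E s x then 1 else 2)"
    using gdist2_char[of E V s] gd sV by auto
  have bip: "bipartite V E"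
    unfolding bipartite_def
  proof (intro exI[of _ "{x\<in>V. E s x}"] conjI allI impI)
    fix x y assume e: "E x y"
    have "gdist2 V E s x \<noteq> gdist2 V E s y" using res e by blast
    then show "(x \<in> {x \<in> V. E s x}) = (y \<notin> {x \<in> V. E s x})"
      using e gd(2)[OF e] gd(3)[OF e] gd(4) unfolding ch by (auto split: if_splits)
  qed auto
  define Cs where "Cs = {y\<in>V. gdist V E s y \<noteq> \<infinity>}"
  have edge_reach: "gdist V E s x \<noteq> \<infinity>" if e: "E x y" for x y
  proof (rule ccontr)
    assume "\<not> gdist V E s x \<noteq> \<infinity>"
    then have ix: "gdist V E s x = \<infinity>" by simp
    have iy: "gdist V E s y = \<infinity>"
    proof (rule ccontr)
      assume "gdist V E s y \<noteq> \<infinity>"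
      moreover have "gdist V E y x \<noteq> \<infinity>"
        using e gd(2,3) by (intro walk_reach[of V E y x "Suc 0"]) (auto simp: walk1)
      ultimately show False using reach_trans[of V E s y x] ix by blast
    qed
    have "gdist2 V E s x = gdist2 V E s y" using ix iy by (simp add: gdist2_def)
    then show False using res e by blast
  qed
  have edge_reach2: "gdist V E s y \<noteq> \<infinity>" if e: "E x y" for x y
    using edge_reach[of y x] e gd(3) by blast
  have finCs: "finite Cs" using gd(1) Cs_def by auto
  have compCs: "component V E Cs" unfolding component_def Cs_def using sV by blast
  obtain x0 y0 where e0: "E x0 y0" using ne unfolding nonempty_graph_def by blast
  have sub: "{x0, y0} \<subseteq> Cs" using edge_reach[OF e0] edge_reach2[OF e0] gd(2)[OF e0] Cs_def by auto
  moreover have "card {x0, y0} = 2" using gd(4)[of x0] e0 by (cases "x0 = y0") auto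
  moreover have "card {x0, y0} \<le> card Cs" using card_mono[OF finCs sub] .
  ultimately have cardCs: "card Cs \<ge> 2" by simp
  have uniq: "C = Cs" if c: "component V E C" "card C \<ge> 2" for C
  proof -
    obtain x where x: "x \<in> V" "C = {y\<in>V. gdist V E x y \<noteq> \<infinity>}" using c unfolding component_def by blast
    have "\<exists>y\<in>C. y \<noteq> x"
    proof (rule ccontr)
      assume "\<not> (\<exists>y\<in>C. y \<noteq> x)"
      then have "C \<subseteq> {x}" by auto
      then have "card C \<le> card {x}" by (intro card_mono) auto
      then have "card C \<le> 1" by simp
      then show False using c by simp
    qed
    then obtain y where y: "y \<in> C" "y \<noteq> x" by blast
    then obtain n where "walk_len V E x y n" using x by (auto simp: gdist_inf)
    then have wyx: "walk_len V E y x n" using walk_sym[of E V x y n] g unfolding graph_def by blast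
    then have "n \<noteq> 0" using y walk0[of V E y x] by (metis gr0I)
    then obtain k where "n = Suc k" by (cases n) auto
    then obtain p where "E p x" using wyx by (auto simp: walkSuc)
    then have sx: "gdist V E s x \<noteq> \<infinity>" using edge_reach2 by blast
    have "gdist V E x z \<noteq> \<infinity> \<longleftrightarrow> gdist V E s z \<noteq> \<infinity>" for z
      using reach_trans[OF sx, of z] reach_trans[OF reach_sym[OF g sx], of z] by blast
    then show ?thesis using x Cs_def by auto
  qed
  have ex1: "\<exists>!C. component V E C \<and> card C \<ge> 2"
  proof (rule ex1I[of _ Cs])
    show "component V E Cs \<and> card Cs \<ge> 2" using compCs cardCs by simp
  next
    fix C assume "component V E C \<and> card C \<ge> 2"
    then show "C = Cs" using uniq by simp
  qed
  have le2: "gdist V E s y \<le> 2" if y: "y \<in> Cs" for y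
  proof (rule ccontr)
    assume nle: "\<not> gdist V E s y \<le> 2"
    obtain n where n: "gdist V E s y = enat n" using y Cs_def by auto
    have n3: "n \<ge> 3" using nle n by (simp add: numeral_eq_enat)
    then obtain k where k: "n = Suc k" by (cases n) auto
    have w: "walk_len V E s y n" using gdist_walk[OF n] .
    then obtain p where p: "walk_len V E s p k" "E p y" using k by (auto simp: walkSuc)
    have "gdist V E s p \<ge> enat k"
    proof (rule ccontr)
      assume "\<not> gdist V E s p \<ge> enat k"
      then obtain j where j: "gdist V E s p = enat j" "j < k"
        by (cases "gdist V E s p") auto
      then have "walk_len V E s y (Suc j)" using gdist_walk[OF j(1)] p gd(2) by (auto simp: walkSuc)
      then have "gdist V E s y \<le> enat (Suc j)" by (rule gdist_le)
      then show False using n j k by simp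
    qed
    then have "gdist2 V E s p = 2" using n3 k unfolding gdist2_def
      by (cases "gdist V E s p") (auto simp: min_def numeral_eq_enat)
    moreover have "gdist2 V E s y = 2" using nle unfolding gdist2_def by (simp add: min_def)
    ultimately show False using res[OF p(2)] by simp
  qed
  have ecc: "eccentricity Cs (induced E Cs) s \<le> 2"
    unfolding eccentricity_def
  proof (subst Max_le_iff)
    show "finite (gdist Cs (induced E Cs) s ` Cs)" using finCs by simp
    show "gdist Cs (induced E Cs) s ` Cs \<noteq> {}" using cardCs by auto
    show "\<forall>a\<in>gdist Cs (induced E Cs) s ` Cs. a \<le> 2"
    proof
      fix a assume "a \<in> gdist Cs (induced E Cs) s ` Cs"
      then obtain y where y: "y \<in> Cs" "a = gdist Cs (induced E Cs) s y" by blast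
      obtain n where n: "gdist V E s y = enat n" using y Cs_def by auto
      have "walk_len Cs (induced E Cs) s y n" using walk_comp[OF gdist_walk[OF n]] Cs_def by simp
      then have "a \<le> enat n" using y(2) gdist_le by simp
      also have "enat n \<le> 2" using le2[OF y(1)] n by simp
      finally show "a \<le> 2" .
    qed
  qed
  have sCs: "s \<in> Cs" using sV Cs_def gdist_zero[of V E s s] by (auto simp: zero_enat_def)
  have "radius Cs (induced E Cs) \<le> 2"
  proof -
    have "Min (eccentricity Cs (induced E Cs) ` Cs) \<le> eccentricity Cs (induced E Cs) s"
      using finCs sCs by (intro Min_le) auto
    then show ?thesis unfolding radius_def using ecc by (rule order_trans)
  qed
  then show ?thesis using bip ex1 uniq by blast
qed



lemma walk_parity:
  assumes "\<forall>x y. E x y \<longrightarrow> (x \<in> A \<longleftrightarrow> y \<notin> A)"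
  shows "walk_len V E x y n \<Longrightarrow> ((y \<in> A) \<longleftrightarrow> (x \<in> A)) \<longleftrightarrow> even n"
proof (induction n arbitrary: y)
  case 0 then show ?case by (auto simp: walk0)
next
  case (Suc n)
  then obtain p where p: "walk_len V E x p n" "E p y" by (auto simp: walkSuc)
  have "(p \<in> A \<longleftrightarrow> y \<notin> A)" using assms p(2) by blast
  then show ?case using Suc.IH[OF p(1)] by auto
qed

lemma props_to_single:
  assumes g: "graph V E" and bip: "bipartite V E"
    and ex: "\<exists>!C. component V E C \<and> card C \<ge> 2"
    and rad: "\<forall>C. component V E C \<and> card C \<ge> 2 \<longrightarrow> radius C (induced E C) \<le> 2"
  shows "\<exists>s\<in>V. \<forall>x y. E x y \<longrightarrow> gdist2 V E s x \<noteq> gdist2 V E s y"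
proof -
  note gd = graphD[OF g]
  obtain C where C: "component V E C" "card C \<ge> 2" using ex by blast
  have uniq: "\<And>D. component V E D \<Longrightarrow> card D \<ge> 2 \<Longrightarrow> D = C" using ex C by blast
  have CV: "C \<subseteq> V" using C(1) unfolding component_def by auto
  have finC: "finite C" using CV gd(1) finite_subset by blast
  have neC: "C \<noteq> {}" using C(2) by auto
  have "radius C (induced E C) \<le> 2" using rad C by blast
  then have "\<exists>s\<in>C. eccentricity C (induced E C) s \<le> 2"
    unfolding radius_def using finC neC by (simp add: Min_le_iff)
  then obtain s where sC: "s \<in> C" and es: "eccentricity C (induced E C) s \<le> 2" by blast
  have dC: "gdist C (induced E C) s y \<le> 2" if "y \<in> C" for y
  proof -
    have "gdist C (induced E C) s y \<le> Max (gdist C (induced E C) s ` C)"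
      using that finC by (intro Max_ge) auto
    then show ?thesis using es unfolding eccentricity_def by (rule order_trans)
  qed
  obtain A where A: "A \<subseteq> V" "\<forall>x y. E x y \<longrightarrow> (x \<in> A \<longleftrightarrow> y \<notin> A)"
    using bip unfolding bipartite_def by blast
  have inC: "x \<in> C" if e: "E x y" for x y
  proof -
    define D where "D = {z\<in>V. gdist V E x z \<noteq> \<infinity>}"
    have xV: "x \<in> V" "y \<in> V" using gd(2)[OF e] by auto
    have cD: "component V E D" unfolding component_def D_def using xV by blast
    have "x \<in> D" using xV gdist_zero[of V E x x] by (auto simp: D_def zero_enat_def)
    moreover have "y \<in> D" using xV e walk_reach[of V E x y "Suc 0"] by (auto simp: D_def walk1)
    moreover have "finite D" using gd(1) D_def by simp
    moreover have "x \<noteq> y" using e gd(4) by blast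
    ultimately have "card D \<ge> 2"
      by (metis card_2_iff card_mono empty_subsetI insert_subset)
    then have "D = C" using uniq cD by blast
    then show ?thesis using \<open>x \<in> D\<close> by simp
  qed
  have dist: "\<exists>m\<le>2. gdist V E s x = enat m" if xC: "x \<in> C" for x
  proof -
    obtain k where k: "gdist C (induced E C) s x = enat k" "k \<le> 2"
      using dC[OF xC] by (cases "gdist C (induced E C) s x") (auto simp: numeral_eq_enat)
    have "walk_len V E s x k" using walk_induced[OF CV gdist_walk[OF k(1)]] .
    then have le: "gdist V E s x \<le> enat k" by (rule gdist_le)
    then obtain m where "gdist V E s x = enat m" "m \<le> k" by (cases "gdist V E s x") auto
    then show ?thesis using k(2) by auto
  qed
  have "\<forall>x y. E x y \<longrightarrow> gdist2 V E s x \<noteq> gdist2 V E s y"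
  proof (intro allI impI)
    fix x y assume e: "E x y"
    have xC: "x \<in> C" using inC e by blast
    have yC: "y \<in> C" using inC gd(3)[OF e] by blast
    obtain m where m: "m \<le> 2" "gdist V E s x = enat m" using dist[OF xC] by blast
    obtain m' where m': "m' \<le> 2" "gdist V E s y = enat m'" using dist[OF yC] by blast
    have p1: "((x \<in> A) \<longleftrightarrow> (s \<in> A)) \<longleftrightarrow> even m" using walk_parity[OF A(2) gdist_walk[OF m(2)]] .
    have p2: "((y \<in> A) \<longleftrightarrow> (s \<in> A)) \<longleftrightarrow> even m'" using walk_parity[OF A(2) gdist_walk[OF m'(2)]] .
    have "x \<in> A \<longleftrightarrow> y \<notin> A" using A(2) e by blast
    then have "m \<noteq> m'" using p1 p2 by auto
    then show "gdist2 V E s x \<noteq> gdist2 V E s y"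
      using m m' unfolding gdist2_def by (auto simp: min_def numeral_eq_enat)
  qed
  then show ?thesis using sC CV by blast
qed



context
  fixes V :: "'a set" and E :: "'a \<Rightarrow> 'a \<Rightarrow> bool"
    and VH :: "'a \<Rightarrow> 'b set" and EH :: "'a \<Rightarrow> 'b \<Rightarrow> 'b \<Rightarrow> bool"
  assumes gG: "graph V E" and cG: "connected_graph V E" and c2: "card V \<ge> 2"
    and gHa: "\<forall>u\<in>V. graph (VH u) (EH u)"
    and nHa: "\<forall>u\<in>V. nonempty_graph (VH u) (EH u)"
begin

lemma gH: "u \<in> V \<Longrightarrow> graph (VH u) (EH u)" using gHa by blast
lemma nH: "u \<in> V \<Longrightarrow> nonempty_graph (VH u) (EH u)" using nHa by blast

abbreviation "PV \<equiv> lex_V V VH"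
abbreviation "PE \<equiv> lex_E V E VH EH"

lemma PE_iff: "PE (u,a) (v,b) \<longleftrightarrow> u \<in> V \<and> a \<in> VH u \<and> v \<in> V \<and> b \<in> VH v \<and> (E u v \<or> (u = v \<and> EH u a b))"
  unfolding lex_E_def by auto

lemma PV_iff: "(u,a) \<in> PV \<longleftrightarrow> u \<in> V \<and> a \<in> VH u"
  unfolding lex_V_def by auto

lemma PE_in: "\<forall>p q. PE p q \<longrightarrow> p \<in> PV \<and> q \<in> PV"
  unfolding lex_E_def lex_V_def by auto

lemma PE_irrefl: "\<forall>p. \<not> PE p p"
proof
  fix p :: "'a \<times> 'b"
  obtain u a where p: "p = (u,a)" by (cases p)
  show "\<not> PE p p"
  proof
    assume "PE p p"
    then have "u \<in> V" "E u u \<or> EH u a a" unfolding p PE_iff by auto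
    then show False using graphD(4)[OF gG, of u] graphD(4)[OF gH[of u], of a] by blast
  qed
qed

lemma PE_sym: "\<forall>p q. PE p q \<longrightarrow> PE q p"
proof (intro allI impI)
  fix p q :: "'a \<times> 'b"
  obtain u a where p: "p = (u,a)" by (cases p)
  obtain v b where q: "q = (v,b)" by (cases q)
  assume "PE p q"
  then have h: "u \<in> V \<and> a \<in> VH u \<and> v \<in> V \<and> b \<in> VH v \<and> (E u v \<or> (u = v \<and> EH u a b))"
    unfolding p q PE_iff .
  then have "E v u \<or> (v = u \<and> EH v b a)"
    using graphD(3)[OF gG, of u v] graphD(3)[OF gH[of u], of a b] by blast
  then show "PE q p" unfolding p q PE_iff using h by blast
qed

lemma PV_fin: "finite PV"
  unfolding lex_V_def using graphD(1)[OF gG] graphD(1)[OF gH] by (intro finite_SigmaI) auto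

lemma dist1: "gdist PV PE p q = 1 \<longleftrightarrow> PE p q"
  using gdist_one[OF PE_in PE_irrefl] .

lemma has_nb: "u \<in> V \<Longrightarrow> \<exists>w. E u w"
proof -
  assume uV: "u \<in> V"
  have "\<exists>v\<in>V. v \<noteq> u"
  proof (rule ccontr)
    assume "\<not> (\<exists>v\<in>V. v \<noteq> u)"
    then have "V \<subseteq> {u}" by auto
    then have "card V \<le> card {u}" by (intro card_mono) auto
    then show False using c2 by simp
  qed
  then obtain v where v: "v \<in> V" "v \<noteq> u" by blast
  then have "gdist V E u v \<noteq> \<infinity>" using cG uV unfolding connected_graph_def by blast
  then obtain n where "walk_len V E u v n" by (auto simp: gdist_inf)
  then have w: "walk_len V E v u n" using walk_sym[of E V u v n] gG unfolding graph_def by blast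
  then have "n \<noteq> 0" using v walk0[of V E v u] by (metis gr0I)
  then obtain k where "n = Suc k" by (cases n) auto
  then obtain p where "E p u" using w by (auto simp: walkSuc)
  then show ?thesis using graphD(3)[OF gG] by blast
qed

lemma dist_layer:
  assumes uV: "u \<in> V" and c: "c \<in> VH u" and a: "a \<in> VH u"
  shows "gdist PV PE (u,c) (u,a) = gdist2 (VH u) (EH u) c a"
proof -
  obtain w where w: "E u w" using has_nb[OF uV] by blast
  have wV: "w \<in> V" using graphD(2)[OF gG w] by simp
  obtain z where z: "z \<in> VH w" using gH[OF wV] unfolding graph_def by blast
  have "walk_len PV PE (u,c) (u,a) (Suc (Suc 0))"
    unfolding walkSuc walk0
    using w z uV wV c a graphD(3)[OF gG w] by (intro exI[of _ "(w,z)"]) (auto simp: PE_iff lex_V_def)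
  then have "walk_len PV PE (u,c) (u,a) 2" by (simp add: numeral_2_eq_2)
  then have "gdist PV PE (u,c) (u,a) \<le> enat 2" by (rule gdist_le)
  then have le2: "gdist PV PE (u,c) (u,a) \<le> 2" by (simp add: numeral_eq_enat)
  have h: "gdist2 (VH u) (EH u) c a = (if c = a \<and> c \<in> VH u then 0 else if EH u c a then 1 else 2)"
    using gdist2_char[of "EH u" "VH u" c a] graphD[OF gH[OF uV]] by blast
  have z0: "gdist PV PE (u,c) (u,a) = 0 \<longleftrightarrow> c = a" using gdist_zero[of PV PE "(u,c)" "(u,a)"] uV c
    by (auto simp: PV_iff)
  have z1: "gdist PV PE (u,c) (u,a) = 1 \<longleftrightarrow> EH u c a" using dist1 uV c a graphD(4)[OF gG]
    by (auto simp: PE_iff)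
  have "\<And>d::enat. d \<le> 2 \<Longrightarrow> d \<noteq> 0 \<Longrightarrow> d \<noteq> 1 \<Longrightarrow> d = 2"
  proof -
    fix d :: enat assume "d \<le> 2" "d \<noteq> 0" "d \<noteq> 1"
    then show "d = 2"
      by (cases d) (auto simp: numeral_eq_enat zero_enat_def one_enat_def)
  qed
  then show ?thesis using h z0 z1 le2 c by auto
qed

lemma far_walk:
  assumes T: "\<forall>z. z \<noteq> u \<and> z \<noteq> v \<longrightarrow> (E z u \<longleftrightarrow> E z v)" and uV: "u \<in> V" and vV: "v \<in> V"
    and fs: "fst s \<noteq> u" "fst s \<noteq> v"
  shows "walk_len PV PE s (t,a) n \<Longrightarrow> t \<in> {u,v} \<Longrightarrow> t' \<in> {u,v} \<Longrightarrow> b \<in> VH t'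
     \<Longrightarrow> \<exists>m\<le>n. walk_len PV PE s (t',b) m"
proof (induction n arbitrary: t a)
  case 0 then show ?case using fs by (auto simp: walk0)
next
  case (Suc n)
  then obtain p where p: "walk_len PV PE s p n" "PE p (t,a)" by (auto simp: walkSuc)
  show ?case
  proof (cases "fst p \<in> {u,v}")
    case True
    have "walk_len PV PE s (fst p, snd p) n" using p(1) by simp
    from Suc.IH[OF this True Suc.prems(3,4)] show ?thesis using le_SucI by blast
  next
    case False
    obtain z c where pz: "p = (z,c)" by (cases p)
    have "E z t" using p(2) False Suc.prems(2) pz by (auto simp: PE_iff)
    then have "E z t'" using T False Suc.prems(2,3) pz by auto
    then have "PE p (t',b)" using p(2) Suc.prems(3,4) uV vV pz by (auto simp: PE_iff)
    moreover have "(t',b) \<in> PV" using Suc.prems(3,4) uV vV by (auto simp: PV_iff)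
    ultimately have "walk_len PV PE s (t',b) (Suc n)" using p(1) unfolding walkSuc by blast
    then show ?thesis by blast
  qed
qed

lemma far_dist:
  assumes T: "\<forall>z. z \<noteq> u \<and> z \<noteq> v \<longrightarrow> (E z u \<longleftrightarrow> E z v)" and uV: "u \<in> V" and vV: "v \<in> V"
    and fs: "fst s \<noteq> u" "fst s \<noteq> v" and a: "a \<in> VH u" and b: "b \<in> VH v"
  shows "gdist PV PE s (u,a) = gdist PV PE s (v,b)"
proof (rule antisym)
  show "gdist PV PE s (u,a) \<le> gdist PV PE s (v,b)"
    by (rule gdist_mono) (rule far_walk[OF T uV vV fs], auto simp: a)
  show "gdist PV PE s (v,b) \<le> gdist PV PE s (u,a)"
    by (rule gdist_mono) (rule far_walk[OF T uV vV fs], auto simp: b)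
qed

lemma layer_hit:
  assumes S: "local_resolving PV PE S" and uV: "u \<in> V"
  shows "\<exists>c. (u,c) \<in> S"
proof -
  obtain a b where e: "EH u a b" using nH[OF uV] unfolding nonempty_graph_def by blast
  have ab: "a \<in> VH u" "b \<in> VH u" using graphD(2)[OF gH[OF uV] e] by auto
  have "PE (u,a) (u,b)" using e ab uV by (simp add: PE_iff)
  then obtain s where s: "s \<in> S" "gdist PV PE s (u,a) \<noteq> gdist PV PE s (u,b)"
    using S unfolding local_resolving_def by blast
  have "fst s = u"
  proof (rule ccontr)
    assume "fst s \<noteq> u"
    then have "gdist PV PE s (u,a) = gdist PV PE s (u,b)"
      using far_dist[where u=u and v=u and s=s and a=a and b=b] uV ab by auto
    then show False using s by simp
  qed
  then show ?thesis using s(1) by (metis prod.collapse)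
qed

lemma lower:
  assumes S: "local_resolving PV PE S"
  shows "card V \<le> card S"
proof -
  have SP: "S \<subseteq> PV" using S unfolding local_resolving_def by blast
  then have fS: "finite S" by (rule finite_subset[OF _ PV_fin])
  have "V \<subseteq> fst ` S"
  proof
    fix u assume "u \<in> V"
    then obtain c where "(u,c) \<in> S" using layer_hit[OF S] by blast
    then show "u \<in> fst ` S" using image_eqI[of u fst "(u,c)" S] by simp
  qed
  then have "card V \<le> card (fst ` S)" using card_mono[OF finite_imageI[OF fS]] by blast
  also have "\<dots> \<le> card S" using fS by (rule card_image_le)
  finally show ?thesis .
qed

lemma PV_res: "local_resolving PV PE PV"
  unfolding local_resolving_def
proof (intro conjI allI impI)
  fix p q assume e: "PE p q"
  have "p \<in> PV" using e unfolding lex_E_def lex_V_def by auto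
  then have "gdist PV PE p p = 0" by (simp add: gdist_zero)
  moreover have "gdist PV PE p q = 1" using e dist1 by simp
  ultimately have "gdist PV PE p p \<noteq> gdist PV PE p q" by simp
  then show "\<exists>s\<in>PV. gdist PV PE s p \<noteq> gdist PV PE s q" using \<open>p \<in> PV\<close> by blast
qed simp

lemma dim_iff: "local_metric_dim PV PE = card V \<longleftrightarrow> (\<exists>S. local_resolving PV PE S \<and> card S = card V)"
proof -
  have ex: "\<exists>k S. local_resolving PV PE S \<and> card S = k" using PV_res by blast
  obtain S0 where S0: "local_resolving PV PE S0" "card S0 = local_metric_dim PV PE"
    using LeastI_ex[OF ex] unfolding local_metric_dim_def by blast
  show ?thesis
  proof
    assume "local_metric_dim PV PE = card V"
    then show "\<exists>S. local_resolving PV PE S \<and> card S = card V" using S0 by auto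
  next
    assume "\<exists>S. local_resolving PV PE S \<and> card S = card V"
    then have "local_metric_dim PV PE \<le> card V" unfolding local_metric_dim_def by (rule Least_le)
    moreover have "card V \<le> local_metric_dim PV PE" using lower[OF S0(1)] S0(2) by simp
    ultimately show "local_metric_dim PV PE = card V" by simp
  qed
qed

lemma closed_twinT:
  assumes "closed_nbhd V E v1 = closed_nbhd V E v2" "v1 \<in> V" "v2 \<in> V"
  shows "\<forall>z. z \<noteq> v1 \<and> z \<noteq> v2 \<longrightarrow> (E z v1 \<longleftrightarrow> E z v2)"
proof (intro allI impI)
  fix z assume z: "z \<noteq> v1 \<and> z \<noteq> v2"
  have "E z v1 \<longleftrightarrow> z \<in> closed_nbhd V E v1"
    using z graphD(2,3)[OF gG] unfolding closed_nbhd_def by blast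
  also have "\<dots> \<longleftrightarrow> z \<in> closed_nbhd V E v2" using assms by simp
  also have "\<dots> \<longleftrightarrow> E z v2"
    using z graphD(2,3)[OF gG] unfolding closed_nbhd_def by blast
  finally show "E z v1 \<longleftrightarrow> E z v2" .
qed

lemma one_le_res:
  assumes uV: "u \<in> V" and R: "local_adj_resolving (VH u) (EH u) B"
  shows "1 \<le> card B"
proof -
  obtain a b where e: "EH u a b" using nH[OF uV] unfolding nonempty_graph_def by blast
  have "B \<noteq> {}" using R e unfolding local_adj_resolving_def by blast
  moreover have "B \<subseteq> VH u" using R unfolding local_adj_resolving_def by blast
  then have "finite B" by (rule finite_subset[OF _ graphD(1)[OF gH[OF uV]]])
  ultimately show ?thesis by (simp add: Suc_le_eq card_gt_0_iff)
qed

lemma forward: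
  assumes S: "local_resolving (lex_V V VH) (lex_E V E VH EH) S" and cS: "card S = card V"
  shows "(\<forall>u\<in>V. card {v \<in> twin_class V E u. in_class_G (VH v) (EH v)} \<le> 1) \<and>
     (\<forall>u\<in>V. bipartite (VH u) (EH u) \<and>
        (\<exists>!C. component (VH u) (EH u) C \<and> card C \<ge> 2) \<and>
        (\<forall>C. component (VH u) (EH u) C \<and> card C \<ge> 2 \<longrightarrow>
              radius C (induced (EH u) C) \<le> 2))"
proof -
  let ?PV = "lex_V V VH" and ?PE = "lex_E V E VH EH"
  have SP: "S \<subseteq> ?PV" using S unfolding local_resolving_def by blast
  have fS: "finite S" by (rule finite_subset[OF SP PV_fin])
  have img: "fst ` S = V"
  proof
    show "fst ` S \<subseteq> V" using SP unfolding lex_V_def by auto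
    show "V \<subseteq> fst ` S"
    proof
      fix u assume "u \<in> V"
      then obtain c where "(u,c) \<in> S" using layer_hit[OF S] by blast
      then show "u \<in> fst ` S" using image_eqI[of u fst "(u,c)" S] by simp
    qed
  qed
  have inj: "inj_on fst S" using fS img cS by (intro eq_card_imp_inj_on) auto
  define \<sigma> where "\<sigma> u = (SOME c. (u,c) \<in> S)" for u
  have \<sigma>S: "(u, \<sigma> u) \<in> S" if "u \<in> V" for u
    unfolding \<sigma>_def using layer_hit[OF S that] by (rule someI_ex)
  have uniqS: "s = (u, \<sigma> u)" if "s \<in> S" "fst s = u" "u \<in> V" for s u
    by (rule inj_onD[OF inj]) (use that \<sigma>S[OF that(3)] in auto)
  have \<sigma>V: "\<sigma> u \<in> VH u" if "u \<in> V" for u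
    using SP \<sigma>S[OF that] unfolding lex_V_def by auto
  have single: "gdist2 (VH u) (EH u) (\<sigma> u) x \<noteq> gdist2 (VH u) (EH u) (\<sigma> u) y"
    if uV: "u \<in> V" and e: "EH u x y" for u x y
  proof -
    have xy: "x \<in> VH u" "y \<in> VH u" using graphD(2)[OF gH[OF uV] e] by auto
    have "?PE (u,x) (u,y)" using e xy uV by (simp add: PE_iff)
    then obtain s where s: "s \<in> S" "gdist ?PV ?PE s (u,x) \<noteq> gdist ?PV ?PE s (u,y)"
      using S unfolding local_resolving_def by blast
    have "fst s = u"
    proof (rule ccontr)
      assume "fst s \<noteq> u"
      then have "gdist ?PV ?PE s (u,x) = gdist ?PV ?PE s (u,y)"
        using far_dist[where u=u and v=u and s=s and a=x and b=y] uV xy by auto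
      then show False using s by simp
    qed
    then have "s = (u, \<sigma> u)" using uniqS s(1) uV by blast
    then show ?thesis using s(2) dist_layer[OF uV \<sigma>V[OF uV] xy(1)] dist_layer[OF uV \<sigma>V[OF uV] xy(2)]
      by simp
  qed
  have HC: "bipartite (VH u) (EH u) \<and> (\<exists>!C. component (VH u) (EH u) C \<and> card C \<ge> 2) \<and>
        (\<forall>C. component (VH u) (EH u) C \<and> card C \<ge> 2 \<longrightarrow> radius C (induced (EH u) C) \<le> 2)"
    if uV: "u \<in> V" for u
    by (rule single_to_props[OF gH[OF uV] nH[OF uV] \<sigma>V[OF uV]]) (rule single[OF uV])
  have basis: "local_adj_basis (VH u) (EH u) {\<sigma> u}" if uV: "u \<in> V" for u
  proof -
    have "local_adj_resolving (VH u) (EH u) {\<sigma> u}"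
      unfolding local_adj_resolving_def using \<sigma>V[OF uV] single[OF uV] by blast
    moreover have "card {\<sigma> u} \<le> card S'" if "local_adj_resolving (VH u) (EH u) S'" for S'
      using one_le_res[OF uV that] by simp
    ultimately show ?thesis unfolding local_adj_basis_def by blast
  qed
  have TW: "card {v \<in> twin_class V E u. in_class_G (VH v) (EH v)} \<le> 1" if uV: "u \<in> V" for u
  proof (rule ccontr)
    let ?M = "{v \<in> twin_class V E u. in_class_G (VH v) (EH v)}"
    assume "\<not> card ?M \<le> 1"
    moreover have finM: "finite ?M" using graphD(1)[OF gG] unfolding twin_class_def by auto
    ultimately obtain v1 v2 where v: "v1 \<in> ?M" "v2 \<in> ?M" "v1 \<noteq> v2"
      using card_le_Suc0_iff_eq[OF finM] by auto
    have vV: "v1 \<in> V" "v2 \<in> V" using v unfolding twin_class_def by auto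
    have cn: "closed_nbhd V E v1 = closed_nbhd V E v2" using v unfolding twin_class_def by auto
    have G1: "in_class_G (VH v1) (EH v1)" "in_class_G (VH v2) (EH v2)" using v by auto
    have "v2 \<in> closed_nbhd V E v1" using cn unfolding closed_nbhd_def by auto
    then have e12: "E v1 v2" using v(3) unfolding closed_nbhd_def by auto
    obtain a where a: "a \<in> VH v1" "{\<sigma> v1} \<subseteq> {w. EH v1 a w}"
      using G1(1) basis[OF vV(1)] unfolding in_class_G_def by blast
    obtain b where b: "b \<in> VH v2" "{\<sigma> v2} \<subseteq> {w. EH v2 b w}"
      using G1(2) basis[OF vV(2)] unfolding in_class_G_def by blast
    have ea: "EH v1 (\<sigma> v1) a" using a graphD(3)[OF gH[OF vV(1)]] by auto
    have eb: "EH v2 (\<sigma> v2) b" using b graphD(3)[OF gH[OF vV(2)]] by auto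
    have "?PE (v1,a) (v2,b)" using e12 a b vV by (simp add: PE_iff)
    then obtain s where s: "s \<in> S" "gdist ?PV ?PE s (v1,a) \<noteq> gdist ?PV ?PE s (v2,b)"
      using S unfolding local_resolving_def by blast
    have e21: "E v2 v1" using graphD(3)[OF gG e12] .
    show False
    proof (cases "fst s = v1")
      case True
      then have "s = (v1, \<sigma> v1)" using uniqS s(1) vV by blast
      then have "?PE s (v1,a)" "?PE s (v2,b)" using ea e12 a b vV \<sigma>V by (auto simp: PE_iff)
      then show False using s(2) dist1[of s "(v1,a)"] dist1[of s "(v2,b)"] by simp
    next
      case F1: False
      show False
      proof (cases "fst s = v2")
        case True
        then have "s = (v2, \<sigma> v2)" using uniqS s(1) vV by blast
        then have "?PE s (v1,a)" "?PE s (v2,b)" using eb e21 a b vV \<sigma>V by (auto simp: PE_iff)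
        then show False using s(2) dist1[of s "(v1,a)"] dist1[of s "(v2,b)"] by simp
      next
        case False
        have "gdist ?PV ?PE s (v1,a) = gdist ?PV ?PE s (v2,b)"
          using far_dist[where u=v1 and v=v2 and s=s and a=a and b=b] closed_twinT[OF cn vV]
            vV F1 False a b by blast
        then show False using s(2) by simp
      qed
    qed
  qed
  show ?thesis using TW HC by blast
qed

lemma backward:
  assumes TW: "\<forall>u\<in>V. card {v \<in> twin_class V E u. in_class_G (VH v) (EH v)} \<le> 1"
    and HC: "\<forall>u\<in>V. bipartite (VH u) (EH u) \<and>
        (\<exists>!C. component (VH u) (EH u) C \<and> card C \<ge> 2) \<and>
        (\<forall>C. component (VH u) (EH u) C \<and> card C \<ge> 2 \<longrightarrow>
              radius C (induced (EH u) C) \<le> 2)"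
  shows "\<exists>S. local_resolving PV PE S \<and> card S = card V"
proof -
  define good where "good u t \<longleftrightarrow> t \<in> VH u \<and>
     (\<forall>x y. EH u x y \<longrightarrow> gdist2 (VH u) (EH u) t x \<noteq> gdist2 (VH u) (EH u) t y) \<and>
     (\<not> in_class_G (VH u) (EH u) \<longrightarrow> (\<forall>a\<in>VH u. \<not> EH u a t))" for u t
  have exgood: "\<exists>t. good u t" if uV: "u \<in> V" for u
  proof -
    obtain s where s: "s \<in> VH u" "\<forall>x y. EH u x y \<longrightarrow> gdist2 (VH u) (EH u) s x \<noteq> gdist2 (VH u) (EH u) s y"
      using props_to_single[OF gH[OF uV]] HC uV by blast
    show ?thesis
    proof (cases "in_class_G (VH u) (EH u)")
      case True
      then show ?thesis using s unfolding good_def by blast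
    next
      case False
      then obtain B where B: "local_adj_basis (VH u) (EH u) B" "\<not> (\<exists>v\<in>VH u. B \<subseteq> {w. EH u v w})"
        unfolding in_class_G_def by blast
      have Rs: "local_adj_resolving (VH u) (EH u) {s}" unfolding local_adj_resolving_def using s by blast
      have RB: "local_adj_resolving (VH u) (EH u) B" using B(1) unfolding local_adj_basis_def by blast
      have "card B \<le> card {s}" using B(1) Rs unfolding local_adj_basis_def by blast
      then have "card B = 1" using one_le_res[OF uV RB] by simp
      then obtain t where t: "B = {t}" by (rule card_1_singletonE)
      have "good u t" unfolding good_def
      proof (intro conjI)
        show "t \<in> VH u" using RB t unfolding local_adj_resolving_def by blast
        show "\<forall>x y. EH u x y \<longrightarrow> gdist2 (VH u) (EH u) t x \<noteq> gdist2 (VH u) (EH u) t y"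
          using RB t unfolding local_adj_resolving_def by blast
        show "\<not> in_class_G (VH u) (EH u) \<longrightarrow> (\<forall>a\<in>VH u. \<not> EH u a t)"
          using B(2) t by blast
      qed
      then show ?thesis by blast
    qed
  qed
  define \<sigma> where "\<sigma> u = (SOME t. good u t)" for u
  have g\<sigma>: "good u (\<sigma> u)" if "u \<in> V" for u
    unfolding \<sigma>_def using exgood[OF that] by (rule someI_ex)
  define S where "S = (\<lambda>u. (u, \<sigma> u)) ` V"
  have cS: "card S = card V" unfolding S_def by (rule card_image) (auto simp: inj_on_def)
  have SP: "S \<subseteq> PV" using g\<sigma> unfolding S_def good_def lex_V_def by auto
  have res: "\<exists>s\<in>S. gdist PV PE s p \<noteq> gdist PV PE s q" if e: "PE p q" for p q
  proof -
    obtain u a where p: "p = (u,a)" by (cases p)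
    obtain v b where q: "q = (v,b)" by (cases q)
    have h: "u \<in> V" "a \<in> VH u" "v \<in> V" "b \<in> VH v" "E u v \<or> (u = v \<and> EH u a b)"
      using e unfolding p q PE_iff by auto
    have inS: "(w, \<sigma> w) \<in> S" if "w \<in> V" for w using that unfolding S_def by blast
    have \<sigma>V: "\<sigma> w \<in> VH w" if "w \<in> V" for w using g\<sigma>[OF that] unfolding good_def by blast
    show ?thesis
    proof (cases "E u v")
      case False
      then have uv: "u = v" "EH u a b" using h(5) by auto
      have "gdist PV PE (u, \<sigma> u) p = gdist2 (VH u) (EH u) (\<sigma> u) a"
        unfolding p by (rule dist_layer[OF h(1) \<sigma>V[OF h(1)] h(2)])
      moreover have "gdist PV PE (u, \<sigma> u) q = gdist2 (VH u) (EH u) (\<sigma> u) b"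
        unfolding q uv(1)[symmetric] using dist_layer[OF h(1) \<sigma>V[OF h(1)], of b] h(4) uv(1) by simp
      moreover have "gdist2 (VH u) (EH u) (\<sigma> u) a \<noteq> gdist2 (VH u) (EH u) (\<sigma> u) b"
        using g\<sigma>[OF h(1)] uv unfolding good_def by blast
      ultimately show ?thesis using inS[OF h(1)] by metis
    next
      case euv: True
      have evu: "E v u" using graphD(3)[OF gG euv] .
      have uv: "u \<noteq> v" using euv graphD(4)[OF gG] by blast
      show ?thesis
      proof (cases "closed_nbhd V E u = closed_nbhd V E v")
        case True
        let ?M = "{w \<in> twin_class V E u. in_class_G (VH w) (EH w)}"
        have finM: "finite ?M" using graphD(1)[OF gG] unfolding twin_class_def by auto
        have "card ?M \<le> 1" using TW h(1) by blast
        then have one: "\<forall>x\<in>?M. \<forall>y\<in>?M. x = y" using card_le_Suc0_iff_eq[OF finM] by simp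
        have "u \<in> twin_class V E u" "v \<in> twin_class V E u"
          using h True unfolding twin_class_def by auto
        then have "\<not> in_class_G (VH u) (EH u) \<or> \<not> in_class_G (VH v) (EH v)"
          using one uv by blast
        then show ?thesis
        proof
          assume nG: "\<not> in_class_G (VH u) (EH u)"
          have "\<not> EH u a (\<sigma> u)" using g\<sigma>[OF h(1)] nG h(2) unfolding good_def by blast
          then have "\<not> EH u (\<sigma> u) a" using graphD(3)[OF gH[OF h(1)]] by blast
          then have "\<not> PE (u, \<sigma> u) p" using graphD(4)[OF gG] unfolding p PE_iff by blast
          then have "gdist PV PE (u, \<sigma> u) p \<noteq> 1" using dist1 by simp
          moreover have "PE (u, \<sigma> u) q" unfolding q PE_iff using h euv \<sigma>V by blast
          then have "gdist PV PE (u, \<sigma> u) q = 1" using dist1 by simp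
          ultimately show ?thesis using inS[OF h(1)] by metis
        next
          assume nG: "\<not> in_class_G (VH v) (EH v)"
          have "\<not> EH v b (\<sigma> v)" using g\<sigma>[OF h(3)] nG h(4) unfolding good_def by blast
          then have "\<not> EH v (\<sigma> v) b" using graphD(3)[OF gH[OF h(3)]] by blast
          then have "\<not> PE (v, \<sigma> v) q" using graphD(4)[OF gG] unfolding q PE_iff by blast
          then have "gdist PV PE (v, \<sigma> v) q \<noteq> 1" using dist1 by simp
          moreover have "PE (v, \<sigma> v) p" unfolding p PE_iff using h evu \<sigma>V by blast
          then have "gdist PV PE (v, \<sigma> v) p = 1" using dist1 by simp
          ultimately show ?thesis using inS[OF h(3)] by metis
        qed
      next
        case False
        have "\<exists>w\<in>V. w \<noteq> u \<and> w \<noteq> v \<and> (E w u \<noteq> E w v)"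
        proof (rule ccontr)
          assume nw: "\<not> (\<exists>w\<in>V. w \<noteq> u \<and> w \<noteq> v \<and> (E w u \<noteq> E w v))"
          have "closed_nbhd V E u = closed_nbhd V E v"
          proof
            show "closed_nbhd V E u \<subseteq> closed_nbhd V E v"
            proof
              fix z assume z: "z \<in> closed_nbhd V E u"
              show "z \<in> closed_nbhd V E v"
              proof (cases "z = u \<or> z = v")
                case True then show ?thesis using euv evu h unfolding closed_nbhd_def by auto
              next
                case False
                then have "z \<in> V" "E u z" using z unfolding closed_nbhd_def by auto
                then have "E v z" using nw False graphD(3)[OF gG] by blast
                then show ?thesis unfolding closed_nbhd_def using \<open>z \<in> V\<close> by auto
              qed
            qed
            show "closed_nbhd V E v \<subseteq> closed_nbhd V E u"
            proof
              fix z assume z: "z \<in> closed_nbhd V E v"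
              show "z \<in> closed_nbhd V E u"
              proof (cases "z = u \<or> z = v")
                case True then show ?thesis using euv evu h unfolding closed_nbhd_def by auto
              next
                case False
                then have "z \<in> V" "E v z" using z unfolding closed_nbhd_def by auto
                then have "E u z" using nw False graphD(3)[OF gG] by blast
                then show ?thesis unfolding closed_nbhd_def using \<open>z \<in> V\<close> by auto
              qed
            qed
          qed
          then show False using False by simp
        qed
        then obtain w where w: "w \<in> V" "w \<noteq> u" "w \<noteq> v" "E w u \<noteq> E w v" by blast
        have "PE (w, \<sigma> w) p \<longleftrightarrow> E w u" unfolding p PE_iff using w h \<sigma>V by auto
        moreover have "PE (w, \<sigma> w) q \<longleftrightarrow> E w v" unfolding q PE_iff using w h \<sigma>V by auto
        ultimately have "gdist PV PE (w, \<sigma> w) p \<noteq> gdist PV PE (w, \<sigma> w) q"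
          using w(4) dist1[of "(w, \<sigma> w)" p] dist1[of "(w, \<sigma> w)" q] by auto
        then show ?thesis using inS[OF w(1)] by blast
      qed
    qed
  qed
  have "local_resolving PV PE S" unfolding local_resolving_def using SP res by blast
  then show ?thesis using cS by blast
qed

end

theorem theorem3:
  fixes V :: "'a set" and E :: "'a \<Rightarrow> 'a \<Rightarrow> bool"
    and VH :: "'a \<Rightarrow> 'b set" and EH :: "'a \<Rightarrow> 'b \<Rightarrow> 'b \<Rightarrow> bool"
  assumes "graph V E" and "connected_graph V E" and "card V \<ge> 2"
    and "\<And>u. u \<in> V \<Longrightarrow> graph (VH u) (EH u)"
    and "\<And>u. u \<in> V \<Longrightarrow> nonempty_graph (VH u) (EH u)"
  shows "local_metric_dim (lex_V V VH) (lex_E V E VH EH) = card V \<longleftrightarrow>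
    ((\<forall>u\<in>V. card {v \<in> twin_class V E u. in_class_G (VH v) (EH v)} \<le> 1) \<and>
     (\<forall>u\<in>V. bipartite (VH u) (EH u) \<and>
        (\<exists>!C. component (VH u) (EH u) C \<and> card C \<ge> 2) \<and>
        (\<forall>C. component (VH u) (EH u) C \<and> card C \<ge> 2 \<longrightarrow>
              radius C (induced (EH u) C) \<le> 2)))"
proof -
  have gHa: "\<forall>u\<in>V. graph (VH u) (EH u)" using assms(4) by blast
  have nHa: "\<forall>u\<in>V. nonempty_graph (VH u) (EH u)" using assms(5) by blast
  note D = dim_iff[OF assms(1-3) gHa nHa]
  note F = forward[OF assms(1-3) gHa nHa]
  note B = backward[OF assms(1-3) gHa nHa]
  show ?thesis
  proof
    assume "local_metric_dim (lex_V V VH) (lex_E V E VH EH) = card V"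
    then obtain S where "local_resolving (lex_V V VH) (lex_E V E VH EH) S" "card S = card V"
      using D by blast
    then show "(\<forall>u\<in>V. card {v \<in> twin_class V E u. in_class_G (VH v) (EH v)} \<le> 1) \<and>
     (\<forall>u\<in>V. bipartite (VH u) (EH u) \<and>
        (\<exists>!C. component (VH u) (EH u) C \<and> card C \<ge> 2) \<and>
        (\<forall>C. component (VH u) (EH u) C \<and> card C \<ge> 2 \<longrightarrow>
              radius C (induced (EH u) C) \<le> 2))" by (rule F)
  next
    assume R: "(\<forall>u\<in>V. card {v \<in> twin_class V E u. in_class_G (VH v) (EH v)} \<le> 1) \<and>
     (\<forall>u\<in>V. bipartite (VH u) (EH u) \<and>
        (\<exists>!C. component (VH u) (EH u) C \<and> card C \<ge> 2) \<and>
        (\<forall>C. component (VH u) (EH u) C \<and> card C \<ge> 2 \<longrightarrow>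
              radius C (induced (EH u) C) \<le> 2))"
    then have "\<exists>S. local_resolving (lex_V V VH) (lex_E V E VH EH) S \<and> card S = card V"
      using B by blast
    then show "local_metric_dim (lex_V V VH) (lex_E V E VH EH) = card V" using D by blast
  qed
qed

end
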